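(* Let $D=\mathrm{diag}(d_1,\ldots,d_r)\in\mathcal{G}l_r(\mathbb{C})$ be an invertible diagonal matrix and let $\mu_1,\ldots,\mu_k$ be its distinct eigenvalues. Fix $N\in\mathcal{U}(D)$ and let $\mathcal{A}_N=\{B\in\mathcal{M}_r(\mathbb{C}): BE_i(N)=E_i(N)B,\ 1\le i\le k\}$, where $E_i(N)$ is the spectral projection of $N$ associated to the eigenvalue $\mu_i$. Then $T_N\Delta|_{\mathcal{A}_N}=I_{\mathcal{A}_N}$, i.e. $T_N\Delta(X)=X$ for every $X\in\mathcal{A}_N$.
   Context: $\mathcal{M}_r(\mathbb{C})$ is the algebra of complex $r\times r$ matrices (viewed as a real vector space), $\mathcal{G}l_r(\mathbb{C})$ the invertible ones, $\mathcal{U}(r)$ the unitary group. $\mathcal{U}(D)=\{UDU^*:U\in\mathcal{U}(r)\}$ is the unitary orbit of $D$. The Aluthge transform of $T=U|T|$ (polar decomposition) is $\Delta(T)=|T|^{1/2}U|T|^{1/2}$; $\Delta$ is $C^\infty$ on $\mathcal{G}l_r(\mathbb{C})$, and $T_N\Delta$ denotes its (real) derivative at $N$. Since $N$ is normal, $\mathcal{A}_N$ coincides with the commutant $\{B: NB=BN\}$. *)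

theory Defs
  imports "HOL-Analysis.Analysis"
begin

text \<open>Complex r x r matrices are modelled as complex^'n^'n with 'n a finite type, r = CARD('n).
 They form a real normed vector space, so the real (Frechet) derivative makes sense.\<close>

type_synonym 'n cmat = "complex^'n^'n"

definition adj :: "'n::finite cmat \<Rightarrow> 'n cmat" where
  "adj A = (\<chi> i j. cnj (A $ j $ i))"

definition diag :: "('n::finite \<Rightarrow> complex) \<Rightarrow> 'n cmat" where
  "diag d = (\<chi> i j. if i = j then d i else 0)"

definition unitary :: "'n::finite cmat \<Rightarrow> bool" where
  "unitary U \<longleftrightarrow> U ** adj U = mat 1 \<and> adj U ** U = mat 1"

definition unitary_orbit :: "'n::finite cmat \<Rightarrow> 'n cmat set" where
  "unitary_orbit D = {U ** D ** adj U | U. unitary U}"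

definition cinner :: "complex^'n::finite \<Rightarrow> complex^'n \<Rightarrow> complex" where
  "cinner x y = (\<Sum>i\<in>UNIV. cnj (x $ i) * y $ i)"

definition psd :: "'n::finite cmat \<Rightarrow> bool" where
  "psd P \<longleftrightarrow> adj P = P \<and> (\<forall>x. 0 \<le> Re (cinner x (P *v x)))"

definition msqrt :: "'n::finite cmat \<Rightarrow> 'n cmat" where
  "msqrt A = (THE P. psd P \<and> P ** P = A)"

definition minv :: "'n::finite cmat \<Rightarrow> 'n cmat" where
  "minv A = (SOME B. A ** B = mat 1 \<and> B ** A = mat 1)"

text \<open>Polar decomposition T = U |T| for invertible T: |T| = (T^* T)^(1/2), U = T |T|^(-1).\<close>
definition mabs :: "'n::finite cmat \<Rightarrow> 'n cmat" where
  "mabs T = msqrt (adj T ** T)"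

definition polar_unitary :: "'n::finite cmat \<Rightarrow> 'n cmat" where
  "polar_unitary T = T ** minv (mabs T)"

definition aluthge :: "'n::finite cmat \<Rightarrow> 'n cmat" where
  "aluthge T = msqrt (mabs T) ** polar_unitary T ** msqrt (mabs T)"

definition spectral_proj :: "'n::finite cmat \<Rightarrow> complex \<Rightarrow> 'n cmat" where
  "spectral_proj N \<mu> = (THE E. E ** E = E \<and> adj E = E \<and>
       range (\<lambda>x. E *v x) = {x. N *v x = \<mu> *s x})"

definition AN :: "('n::finite \<Rightarrow> complex) \<Rightarrow> 'n cmat \<Rightarrow> 'n cmat set" where
  "AN d N = {B. \<forall>\<mu>\<in>range d. B ** spectral_proj N \<mu> = spectral_proj N \<mu> ** B}"

end

theory Submission
  imports Defs
begin


section \<open>Basic matrix algebra\<close>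

lemma mm_add_l: "(A + B) ** C = A ** C + B ** (C::'a::semiring_1^'n^'n)"
  by (simp add: vec_eq_iff matrix_matrix_mult_def sum.distrib ring_distribs)
lemma mm_add_r: "C ** (A + B) = C ** A + C ** (B::'a::semiring_1^'n^'n)"
  by (simp add: matrix_add_ldistrib)
lemma mm_diff_l: "(A - B) ** C = A ** C - B ** (C::'a::ring_1^'n^'n)"
  by (simp add: vec_eq_iff matrix_matrix_mult_def sum_subtractf ring_distribs)
lemma mm_diff_r: "C ** (A - B) = C ** A - C ** (B::'a::ring_1^'n^'n)"
  by (simp add: vec_eq_iff matrix_matrix_mult_def sum_subtractf ring_distribs)
lemma mm_minus_l: "(- A) ** C = - (A ** (C::'a::ring_1^'n^'n))"
  by (simp add: vec_eq_iff matrix_matrix_mult_def sum_negf)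
lemma mm_minus_r: "C ** (- A) = - (C ** (A::'a::ring_1^'n^'n))"
  by (simp add: vec_eq_iff matrix_matrix_mult_def sum_negf)
lemma mm_scaleR_l: "(r *\<^sub>R A) ** C = r *\<^sub>R (A ** (C::complex^'n^'n))"
  by (simp add: scalar_matrix_assoc)
lemma mm_scaleR_r: "C ** (r *\<^sub>R A) = r *\<^sub>R (C ** (A::complex^'n^'n))"
  by (simp add: matrix_scalar_ac scalar_matrix_assoc[symmetric])

lemma adj_nth[simp]: "adj A $ i $ j = cnj (A $ j $ i)" by (simp add: adj_def)
lemma adj_adj[simp]: "adj (adj A) = A" by (simp add: vec_eq_iff)
lemma adj_mult: "adj (A ** B) = adj B ** adj A"
  by (simp add: vec_eq_iff matrix_matrix_mult_def mult.commute)
lemma adj_add: "adj (A + B) = adj A + adj B" by (simp add: vec_eq_iff)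
lemma adj_diff: "adj (A - B) = adj A - adj B" by (simp add: vec_eq_iff)
lemma adj_minus: "adj (- A) = - adj A" by (simp add: vec_eq_iff)
lemma adj_scaleR: "adj (r *\<^sub>R A) = r *\<^sub>R adj A" by (simp add: vec_eq_iff)
lemma adj_zero[simp]: "adj 0 = 0" by (simp add: vec_eq_iff)
lemma adj_mat[simp]: "adj (mat 1) = mat 1" by (simp add: vec_eq_iff mat_def)
lemma adj_inj: "adj A = adj B \<longleftrightarrow> A = B" by (metis adj_adj)

lemma linear_adj: "linear (adj :: 'n::finite cmat \<Rightarrow> _)"
  by (rule linearI) (simp_all add: adj_add adj_scaleR)
lemma bl_adj: "bounded_linear (adj :: 'n::finite cmat \<Rightarrow> _)"
  using linear_adj linear_conv_bounded_linear by blast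

lemma cinner_adj: "cinner x (A *v y) = cinner (adj A *v x) y"
  unfolding cinner_def matrix_vector_mult_def
  apply (simp add: sum_distrib_left sum_distrib_right mult_ac)
  apply (rule sum.swap)
  done

lemma norm_vec_le_sum: "norm (x::'a::real_normed_vector^'n) \<le> (\<Sum>i\<in>UNIV. norm (x$i))"
  unfolding norm_vec_def by (rule L2_set_le_sum) auto

lemma cinner_self: "cinner x x = of_real ((norm x)^2)"
proof -
  have "(norm x)^2 = (\<Sum>i\<in>UNIV. (norm (x$i))^2)"
    unfolding norm_vec_def L2_set_def by (simp add: sum_nonneg)
  then have "of_real ((norm x)^2) = (\<Sum>i\<in>UNIV. of_real ((norm (x$i))^2) :: complex)"
    by simp
  also have "\<dots> = cinner x x" unfolding cinner_def
    by (rule sum.cong) (auto simp: mult.commute, metis complex_norm_square of_real_power)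
  finally show ?thesis by simp
qed

lemma Re_cinner_self: "Re (cinner x x) = (norm x)^2"
  by (simp add: cinner_self)

lemma cmod_nth_le: "cmod (x$i) \<le> norm (x::complex^'n::finite)"
  using Finite_Cartesian_Product.norm_nth_le[of x i] by simp
lemma cmod_nth2_le: "cmod (A$i$j) \<le> norm (A::'n::finite cmat)"
  using Finite_Cartesian_Product.norm_nth_le[of "A$i" j] Finite_Cartesian_Product.norm_nth_le[of A i] by simp

lemma sum_le_card_bound:
  fixes f :: "'n::finite \<Rightarrow> real"
  assumes "\<And>i. f i \<le> K" shows "(\<Sum>i\<in>UNIV. f i) \<le> real CARD('n) * K"
  using sum_bounded_above[of UNIV f K] assms by simp

lemma norm_cinner_le: "cmod (cinner x y) \<le> real CARD('n) * (norm x * norm y)"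
  for x y :: "complex^'n::finite"
proof -
  have "cmod (cinner x y) \<le> (\<Sum>i\<in>UNIV. cmod (cnj (x$i) * y$i))"
    unfolding cinner_def by (rule norm_sum)
  also have "\<dots> \<le> real CARD('n) * (norm x * norm y)"
    apply (rule sum_le_card_bound)
    apply (simp add: norm_mult)
    apply (intro mult_mono cmod_nth_le) apply auto
    done
  finally show ?thesis .
qed

lemma norm_mv_le: "norm (A *v x) \<le> real CARD('n) * real CARD('n) * (norm A * norm x)"
  for A :: "'n::finite cmat"
proof -
  have "norm (A *v x) \<le> (\<Sum>i\<in>UNIV. norm ((A *v x)$i))" by (rule norm_vec_le_sum)
  also have "\<dots> \<le> real CARD('n) * (real CARD('n) * (norm A * norm x))"
  proof (rule sum_le_card_bound)
    fix i
    have "norm ((A *v x)$i) \<le> (\<Sum>j\<in>UNIV. norm (A$i$j * x$j))"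
      unfolding matrix_vector_mult_def by (simp add: norm_sum)
    also have "\<dots> \<le> real CARD('n) * (norm A * norm x)"
      apply (rule sum_le_card_bound)
      apply (simp add: norm_mult)
      apply (intro mult_mono cmod_nth_le cmod_nth2_le)
      apply (auto)
      done
    finally show "norm ((A *v x)$i) \<le> real CARD('n) * (norm A * norm x)" .
  qed
  finally show ?thesis by (simp add: mult_ac)
qed

lemma norm_mm_le: "norm (A ** B) \<le> real CARD('n) * real CARD('n) * real CARD('n) * (norm A * norm B)"
  for A B :: "'n::finite cmat"
proof -
  have "norm (A ** B) \<le> (\<Sum>i\<in>UNIV. norm ((A ** B)$i))" by (rule norm_vec_le_sum)
  also have "\<dots> \<le> real CARD('n) * (real CARD('n) * (real CARD('n) * (norm A * norm B)))"
  proof (rule sum_le_card_bound)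
    fix i
    have "norm ((A ** B)$i) \<le> (\<Sum>j\<in>UNIV. norm ((A ** B)$i$j))" by (rule norm_vec_le_sum)
    also have "\<dots> \<le> real CARD('n) * (real CARD('n) * (norm A * norm B))"
    proof (rule sum_le_card_bound)
      fix j
      have "norm ((A ** B)$i$j) \<le> (\<Sum>k\<in>UNIV. norm (A$i$k * B$k$j))"
        unfolding matrix_matrix_mult_def by (simp add: norm_sum)
      also have "\<dots> \<le> real CARD('n) * (norm A * norm B)"
        apply (rule sum_le_card_bound)
        apply (simp add: norm_mult)
        apply (intro mult_mono cmod_nth2_le)
         apply auto
        done
      finally show "norm ((A ** B)$i$j) \<le> real CARD('n) * (norm A * norm B)" .
    qed
    finally show "norm ((A ** B)$i) \<le> real CARD('n) * (real CARD('n) * (norm A * norm B))" .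
  qed
  finally show ?thesis by (simp add: mult_ac)
qed

lemma bb_mm: "bounded_bilinear (\<lambda>(A::'n::finite cmat) (B::'n cmat). A ** B)"
  apply unfold_locales
      apply (simp add: vec_eq_iff matrix_matrix_mult_def sum.distrib ring_distribs)
     apply (simp add: matrix_add_ldistrib)
    apply (simp add: scalar_matrix_assoc[symmetric])
   apply (simp add: matrix_scalar_ac scalar_matrix_assoc[symmetric])
  apply (rule exI[of _ "real CARD('n) * real CARD('n) * real CARD('n)"])
  apply (intro allI)
  subgoal for a b using norm_mm_le[of a b] by (simp add: mult_ac)
  done




definition upd :: "real \<Rightarrow> 'n::finite cmat \<Rightarrow> bool" where
 "upd \<delta> M \<longleftrightarrow> adj M = M \<and> 0 < \<delta> \<and> (\<forall>x. \<delta> * (norm x)^2 \<le> Re (cinner x (M *v x)))"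

lemma upd_psd: "upd \<delta> M \<Longrightarrow> psd M"
  unfolding upd_def psd_def by (meson order_trans mult_nonneg_nonneg zero_le_power2 less_imp_le)

lemma sylv:
  fixes S Q Z :: "'n::finite cmat"
  assumes S: "upd \<delta> S" and Q: "psd Q" and eq: "S ** Z + Z ** Q = 0"
  shows "Z = 0"
proof -
  define c where "c j = (\<chi> i. Z$i$j)" for j
  define w where "w i = (\<chi> k. cnj (Z$i$k))" for i
  have h1: "(\<Sum>j\<in>UNIV. cinner (c j) (S *v c j)) = (\<Sum>j\<in>UNIV. \<Sum>i\<in>UNIV. cnj (Z$i$j) * (S ** Z)$i$j)"
    unfolding c_def cinner_def matrix_vector_mult_def matrix_matrix_mult_def by simp
  have h2: "(\<Sum>i\<in>UNIV. cinner (w i) (Q *v w i)) = (\<Sum>i\<in>UNIV. \<Sum>j\<in>UNIV. cnj (Z$i$j) * (Z ** Q)$i$j)"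
    unfolding w_def cinner_def matrix_vector_mult_def matrix_matrix_mult_def
    apply (simp add: sum_distrib_left sum_distrib_right mult_ac)
    apply (rule sum.cong, rule refl)
    apply (rule sum.swap)
    done
  have e: "(S ** Z)$i$j + (Z ** Q)$i$j = 0" for i j
    using eq by (simp add: vec_eq_iff)
  have h3: "(\<Sum>j\<in>UNIV. cinner (c j) (S *v c j)) + (\<Sum>i\<in>UNIV. cinner (w i) (Q *v w i)) = 0"
    unfolding h1 h2
    apply (subst sum.swap)
    apply (simp add: sum.distrib[symmetric] ring_distribs[symmetric] e)
    done
  define a where "a j = Re (cinner (c j) (S *v c j))" for j
  define b where "b i = Re (cinner (w i) (Q *v w i))" for i
  have a0: "\<delta> * (norm (c j))^2 \<le> a j" for j using S unfolding upd_def a_def by blast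
  have d0: "0 < \<delta>" using S unfolding upd_def by blast
  have ann: "0 \<le> a j" for j using a0[of j] d0 by (meson mult_nonneg_nonneg order_trans less_imp_le zero_le_power2)
  have bnn: "0 \<le> b i" for i using Q unfolding psd_def b_def by blast
  have "(\<Sum>j\<in>UNIV. a j) + (\<Sum>i\<in>UNIV. b i) = 0"
    using arg_cong[OF h3, of Re] unfolding a_def b_def by simp
  moreover have "0 \<le> (\<Sum>j\<in>UNIV. a j)" "0 \<le> (\<Sum>i\<in>UNIV. b i)"
    using ann bnn by (auto intro: sum_nonneg)
  ultimately have "(\<Sum>j\<in>UNIV. a j) = 0" by linarith
  then have "a j = 0" for j using ann by (simp add: sum_nonneg_eq_0_iff)
  then have "\<delta> * (norm (c j))^2 \<le> 0" for j using a0[of j] by simp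
  then have "(norm (c j))^2 \<le> 0" for j using d0 by (simp add: mult_le_0_iff)
  then have "norm (c j) = 0" for j by (simp add: power2_eq_square mult_le_0_iff)
  then have "c j = 0" for j by simp
  then show "Z = 0" unfolding c_def by (simp add: vec_eq_iff)
qed

lemma sqrt_unique:
  fixes S Q :: "'n::finite cmat"
  assumes "upd \<delta> S" "psd Q" "S ** S = Q ** Q"
  shows "S = Q"
proof -
  have "S ** (S - Q) + (S - Q) ** Q = 0"
    using assms(3) by (simp add: mm_diff_l mm_diff_r)
  then have "S - Q = 0" by (rule sylv[OF assms(1,2)])
  then show ?thesis by simp
qed

lemma msqrt_eq:
  assumes "upd \<delta> S" "S ** S = A"
  shows "msqrt A = S"
  unfolding msqrt_def
proof (rule the_equality)
  show "psd S \<and> S ** S = A" using assms upd_psd by blast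
  fix P assume "psd P \<and> P ** P = A"
  then show "P = S" using sqrt_unique[OF assms(1), of P] assms(2) by auto
qed

lemma minv_eq:
  fixes A B :: "'n::finite cmat"
  assumes "A ** B = mat 1" "B ** A = mat 1"
  shows "minv A = B"
proof -
  have ex: "A ** minv A = mat 1 \<and> minv A ** A = mat 1"
    unfolding minv_def by (rule someI[of _ B]) (use assms in blast)
  have "minv A = minv A ** (A ** B)" using assms by simp
  also have "\<dots> = B" by (simp add: matrix_mul_assoc ex)
  finally show ?thesis .
qed

lemma minv_works:
  fixes A B :: "'n::finite cmat"
  assumes "A ** B = mat 1"
  shows "A ** minv A = mat 1 \<and> minv A ** A = mat 1"
proof -
  have "B ** A = mat 1" using assms
    by (rule matrix_left_right_inverse1)
  then show ?thesis using minv_eq assms by metis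
qed

lemma proj_unique:
  fixes E F :: "'n::finite cmat"
  assumes "E ** E = E" "adj E = E" "F ** F = F" "adj F = F"
    and "range (\<lambda>x. E *v x) = range (\<lambda>x. F *v x)"
  shows "E = F"
proof -
  have FE: "F ** E = E"
  proof (subst matrix_eq, intro allI)
    fix x
    have "E *v x \<in> range (\<lambda>x. F *v x)" using assms(5) by blast
    then obtain y where y: "E *v x = F *v y" by blast
    show "(F ** E) *v x = E *v x"
      by (metis matrix_vector_mul_assoc y assms(3))
  qed
  have EF: "E ** F = F"
  proof (subst matrix_eq, intro allI)
    fix x
    have "F *v x \<in> range (\<lambda>x. E *v x)" using assms(5) by blast
    then obtain y where y: "F *v x = E *v y" by blast
    show "(E ** F) *v x = F *v x"
      by (metis matrix_vector_mul_assoc y assms(1))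
  qed
  have "E = adj (F ** E)" using FE assms(2) by simp
  also have "\<dots> = E ** F" by (simp add: adj_mult assms)
  finally show ?thesis using EF by simp
qed




lemma continuous_det: "continuous_on UNIV (det :: 'n::finite cmat \<Rightarrow> complex)"
  unfolding det_def by (intro continuous_intros)

lemma det_eventually_nz:
  fixes A :: "'n::finite cmat"
  assumes "det A \<noteq> 0"
  shows "\<exists>r>0. \<forall>B. dist B A < r \<longrightarrow> det B \<noteq> 0"
proof -
  have "isCont det A" using continuous_det continuous_on_eq_continuous_at by blast
  then obtain r where "r > 0" "\<forall>B. dist B A < r \<longrightarrow> dist (det B) (det A) < cmod (det A)"
    using assms unfolding continuous_at_eps_delta by (metis zero_less_norm_iff)
  then show ?thesis
    by (metis dist_norm dist_commute less_irrefl diff_zero)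
qed

lemma det_nz_inv:
  fixes B :: "'n::finite cmat"
  assumes "det B \<noteq> 0"
  shows "B ** minv B = mat 1 \<and> minv B ** B = mat 1"
proof -
  have "invertible B" using assms invertible_det_nz by blast
  then obtain C where "B ** C = mat 1" using invertible_right_inverse by blast
  then show ?thesis by (rule minv_works)
qed

abbreviation kk :: "'n::finite itself \<Rightarrow> real" where
  "kk _ \<equiv> real CARD('n) * real CARD('n) * real CARD('n)"

lemma nmm: "norm (A ** B) \<le> kk TYPE('n) * (norm A * norm B)" for A B :: "'n::finite cmat"
  by (rule norm_mm_le)

lemma kk_pos: "0 < kk TYPE('n::finite)" by simp

lemma nmm3: "norm (A ** B ** C) \<le> kk TYPE('n) * kk TYPE('n) * (norm A * norm B * norm C)"
  for A B C :: "'n::finite cmat"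
proof -
  have "norm (A ** B ** C) \<le> kk TYPE('n) * (norm (A ** B) * norm C)" by (rule nmm)
  also have "\<dots> \<le> kk TYPE('n) * ((kk TYPE('n) * (norm A * norm B)) * norm C)"
    by (intro mult_left_mono mult_right_mono nmm) auto
  finally show ?thesis by (simp add: mult_ac)
qed

lemma bl_ml: "bounded_linear (\<lambda>H. (A::'n::finite cmat) ** (H::'n::finite cmat))"
  by (rule bounded_bilinear.bounded_linear_right[OF bb_mm])
lemma bl_mr: "bounded_linear (\<lambda>H. (H::'n::finite cmat) ** (A::'n cmat))"
  by (rule bounded_bilinear.bounded_linear_left[OF bb_mm])

lemma minv_deriv:
  fixes A Ai :: "'n::finite cmat"
  assumes AAi: "A ** Ai = mat 1"
  shows "(minv has_derivative (\<lambda>H. - (Ai ** H ** Ai))) (at A)"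
proof -
  have AiA: "Ai ** A = mat 1" using AAi by (rule matrix_left_right_inverse1)
  have mA: "minv A = Ai" using minv_eq AAi AiA by blast
  have "det A \<noteq> 0" using AAi invertible_det_nz invertible_right_inverse by blast
  then obtain r where r: "r > 0" "\<forall>B. dist B A < r \<longrightarrow> det B \<noteq> 0"
    using det_eventually_nz by blast
  define k where "k = kk TYPE('n)"
  have k0: "0 < k" unfolding k_def by simp
  define a where "a = norm Ai"
  define \<rho> where "\<rho> = min r (1 / (2 * k * k * (a + 1)))"
  have "0 < a + 1" by (simp add: a_def add_nonneg_pos)
  then have "0 < k * (k * (a + 1))" using k0 by (simp add: mult_pos_pos)
  then have \<rho>0: "0 < \<rho>" unfolding \<rho>_def using r k0 by (simp add: a_def)
  have bl: "bounded_linear (\<lambda>H. - (Ai ** H ** Ai))"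
  proof -
    have "bounded_linear (\<lambda>H. (Ai ** H) ** Ai)"
      by (rule bounded_linear_compose[OF bl_mr bl_ml])
    then show ?thesis by (rule bounded_linear_minus)
  qed
  have est: "norm (minv y - minv A - - (Ai ** (y - A) ** Ai)) / norm (y - A)
             \<le> 2 * k * k * k * k * a * a * a * norm (y - A)"
    if y: "dist y A < \<rho>" for y
  proof -
    define H where "H = y - A"
    define B where "B = minv y"
    have "det y \<noteq> 0" using r y \<rho>_def by auto
    then have yB: "y ** B = mat 1" "B ** y = mat 1" using det_nz_inv B_def by auto
    have id1: "B - Ai = - (B ** H ** Ai)"
    proof -
      have "B ** H ** Ai = B ** y ** Ai - B ** A ** Ai"
        by (simp add: H_def mm_diff_l mm_diff_r)
      also have "\<dots> = Ai - B" using yB AAi by (simp add: matrix_mul_assoc[symmetric])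
      finally show ?thesis by simp
    qed
    have X: "B ** H ** Ai = Ai - B" using id1 by (metis minus_diff_eq minus_minus)
    have id2: "B - Ai + Ai ** H ** Ai = B ** H ** Ai ** H ** Ai"
    proof -
      have "B ** H ** Ai ** H ** Ai = (B ** H ** Ai) ** (H ** Ai)"
        by (simp add: matrix_mul_assoc)
      also have "\<dots> = (Ai - B) ** (H ** Ai)" by (simp add: X)
      also have "\<dots> = Ai ** H ** Ai - B ** H ** Ai" by (simp add: mm_diff_l matrix_mul_assoc)
      also have "\<dots> = B - Ai + Ai ** H ** Ai" using X by (simp add: algebra_simps)
      finally show ?thesis by simp
    qed
    have nH: "norm H < \<rho>" using y by (simp add: H_def dist_norm)
    have nH2: "k * k * a * norm H \<le> 1/2"
    proof -
      have "norm H \<le> 1 / (2 * k * k * (a + 1))" using nH \<rho>_def by simp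
      then have "k * k * (a + 1) * norm H \<le> k * k * (a + 1) * (1 / (2 * k * k * (a + 1)))"
        by (intro mult_left_mono) (auto simp: a_def k0 less_imp_le)
      also have "\<dots> = 1/2"
      proof -
        have "0 < k * k * (a + 1)" using k0 \<open>0 < a + 1\<close> by simp
        then show ?thesis using k0 \<open>0 < a + 1\<close> by (simp add: divide_simps)
      qed
      finally have "k * k * (a + 1) * norm H \<le> 1/2" .
      moreover have "k * k * a * norm H \<le> k * k * (a + 1) * norm H"
        by (intro mult_right_mono mult_left_mono) (auto simp: k0 less_imp_le)
      ultimately show ?thesis by linarith
    qed
    have nB: "norm B \<le> 2 * a"
    proof -
      have "B = Ai - B ** H ** Ai" using id1 by (simp add: algebra_simps)
      then have "norm B \<le> a + norm (B ** H ** Ai)" unfolding a_def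
        by (metis norm_triangle_ineq4)
      also have "norm (B ** H ** Ai) \<le> k * k * (norm B * norm H * a)"
        using nmm3 k_def a_def by metis
      finally have "norm B \<le> a + norm B * (k * k * a * norm H)" by (simp add: mult_ac)
      also have "\<dots> \<le> a + norm B * (1/2)"
        by (intro add_left_mono mult_left_mono nH2) auto
      finally show ?thesis by simp
    qed
    have "norm (B - Ai + Ai ** H ** Ai) \<le> k * k * (norm (B ** H ** Ai) * norm H * a)"
      unfolding id2 using nmm3[of "B ** H ** Ai" H Ai] k_def a_def by simp
    also have "\<dots> \<le> k * k * ((k * k * (norm B * norm H * a)) * norm H * a)"
      by (intro mult_left_mono mult_right_mono nmm3[of B H Ai, folded k_def a_def])
         (auto simp: k0 less_imp_le a_def)
    also have "\<dots> \<le> k * k * ((k * k * ((2 * a) * norm H * a)) * norm H * a)"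
      by (intro mult_left_mono mult_right_mono nB) (auto simp: k0 less_imp_le a_def)
    also have "\<dots> = (2 * k * k * k * k * a * a * a * norm H) * norm H" by (simp add: mult_ac)
    finally have *: "norm (B - Ai + Ai ** H ** Ai) \<le> (2 * k * k * k * k * a * a * a * norm H) * norm H" .
    show ?thesis
    proof (cases "norm H = 0")
      case True then show ?thesis using k0 by (simp add: H_def a_def)
    next
      case False
      then have "norm (B - Ai + Ai ** H ** Ai) / norm H \<le> 2 * k * k * k * k * a * a * a * norm H"
        using * by (simp add: divide_le_eq)
      then show ?thesis unfolding H_def B_def mA by simp
    qed
  qed
  show ?thesis
    unfolding has_derivative_iff_norm
  proof (intro conjI bl)
    have ev: "\<forall>\<^sub>F y in at A. norm (norm (minv y - minv A - - (Ai ** (y - A) ** Ai)) / norm (y - A))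
             \<le> 2 * k * k * k * k * a * a * a * norm (y - A)"
    proof -
      have "\<forall>\<^sub>F y in at A. dist y A < \<rho>" using \<rho>0 unfolding eventually_at by (auto intro!: exI[of _ \<rho>])
      then show ?thesis by eventually_elim (use est in auto)
    qed
    have "((\<lambda>y. 2 * k * k * k * k * a * a * a * norm (y - A)) \<longlongrightarrow> 2 * k * k * k * k * a * a * a * norm (A - A)) (at A)"
      by (intro tendsto_intros)
    then have "((\<lambda>y. 2 * k * k * k * k * a * a * a * norm (y - A)) \<longlongrightarrow> 0) (at A)" by simp
    then show "((\<lambda>y. norm (minv y - minv A - - (Ai ** (y - A) ** Ai)) / norm (y - A)) \<longlongrightarrow> 0) (at A)"
      using Lim_null_comparison[OF ev] by blast
  qed
qed




definition sqd :: "'n::finite cmat \<Rightarrow> 'n cmat \<Rightarrow>\<^sub>L 'n cmat" where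
  "sqd X = Blinfun (\<lambda>H. X ** H + H ** X)"

lemma bl_sqd: "bounded_linear (\<lambda>H. X ** H + H ** (X::'n::finite cmat))"
  by (intro bounded_linear_add bl_ml bl_mr)

lemma sqd_apply: "blinfun_apply (sqd X) = (\<lambda>H. X ** H + H ** X)"
  unfolding sqd_def by (rule bounded_linear_Blinfun_apply[OF bl_sqd])

lemma sq_deriv: "((\<lambda>X. X ** X) has_derivative blinfun_apply (sqd X)) (at (X::'n::finite cmat))"
  unfolding sqd_apply
  using bounded_bilinear.FDERIV[OF bb_mm has_derivative_ident has_derivative_ident, of X UNIV]
  by (simp add: add.commute)

lemma linear_sqd: "linear (sqd :: 'n::finite cmat \<Rightarrow> _)"
proof (rule linearI)
  fix X Y :: "'n cmat" and r :: real
  show "sqd (X + Y) = sqd X + sqd Y"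
    by (rule blinfun_eqI) (simp add: sqd_apply blinfun.add_left mm_add_l mm_add_r algebra_simps)
  show "sqd (r *\<^sub>R X) = r *\<^sub>R sqd X"
    by (rule blinfun_eqI) (simp add: sqd_apply mm_scaleR_l mm_scaleR_r blinfun.scaleR_left scaleR_add_right)
qed

lemma cont_sqd: "continuous_on UNIV (sqd :: 'n::finite cmat \<Rightarrow> _)"
  by (rule linear_continuous_on[OF linear_sqd[unfolded linear_conv_bounded_linear]])

lemma sqd_inj:
  assumes "upd \<delta> M"
  shows "inj (blinfun_apply (sqd M))"
proof -
  have "linear (blinfun_apply (sqd M))" by (rule bounded_linear.linear[OF blinfun.bounded_linear_right])
  moreover have "\<forall>H. blinfun_apply (sqd M) H = 0 \<longrightarrow> H = 0"
  proof (intro allI impI)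
    fix H assume "blinfun_apply (sqd M) H = 0"
    then have "M ** H + H ** M = 0" by (simp add: sqd_apply)
    then show "H = 0" by (rule sylv[OF assms upd_psd[OF assms]])
  qed
  ultimately show ?thesis by (simp add: linear_injective_0)
qed

lemma cinner_add_right: "cinner x (a + b) = cinner x a + cinner x b"
  by (simp add: cinner_def sum.distrib ring_distribs)

lemma mv_split: "P *v x = M *v x + (P - M) *v x" for P M :: "'n::finite cmat"
  by (simp add: vec_eq_iff matrix_vector_mult_def sum.distrib[symmetric] ring_distribs)

lemma upd_perturb:
  fixes M P :: "'n::finite cmat"
  assumes M: "upd \<delta> M" and P: "adj P = P"
    and close: "real CARD('n) * real CARD('n) * real CARD('n) * norm (P - M) \<le> \<delta>/2"
  shows "upd (\<delta>/2) P"
  unfolding upd_def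
proof (intro conjI allI P)
  show "0 < \<delta>/2" using M upd_def by auto
  fix x
  define c where "c = real CARD('n)"
  have "cmod (cinner x ((P - M) *v x)) \<le> c * (norm x * norm ((P - M) *v x))"
    using norm_cinner_le c_def by blast
  also have "\<dots> \<le> c * (norm x * (c * c * (norm (P - M) * norm x)))"
    by (intro mult_left_mono norm_mv_le[of "P - M" x, folded c_def]) (auto simp: c_def)
  also have "\<dots> = (c * c * c * norm (P - M)) * (norm x)^2" by (simp add: power2_eq_square mult_ac)
  also have "\<dots> \<le> \<delta>/2 * (norm x)^2"
    by (intro mult_right_mono) (use close c_def in auto)
  finally have b: "cmod (cinner x ((P - M) *v x)) \<le> \<delta>/2 * (norm x)^2" .
  have "Re (cinner x (P *v x)) = Re (cinner x (M *v x)) + Re (cinner x ((P - M) *v x))"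
    by (subst mv_split[where P=P and M=M]) (simp add: cinner_add_right)
  moreover have "\<delta> * (norm x)^2 \<le> Re (cinner x (M *v x))" using M upd_def by blast
  moreover have "- cmod (cinner x ((P - M) *v x)) \<le> Re (cinner x ((P - M) *v x))"
    using abs_Re_le_cmod[of "cinner x ((P - M) *v x)"] by linarith
  ultimately show "\<delta>/2 * (norm x)^2 \<le> Re (cinner x (P *v x))" using b by linarith
qed

lemma local_sqrt:
  fixes M :: "'n::finite cmat"
  assumes M: "upd \<delta> M"
  obtains g g' \<epsilon> where "\<epsilon> > 0" "g (M ** M) = M" "continuous (at (M ** M)) g"
    "(g has_derivative g') (at (M ** M))"
    "\<And>K L. M ** L + L ** M = K \<Longrightarrow> g' K = L"
    "\<And>z. dist z (M ** M) < \<epsilon> \<Longrightarrow> adj z = z \<Longrightarrow> upd (\<delta>/2) (g z) \<and> g z ** g z = z"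
proof -
  define f where "f = blinfun_apply (sqd M)"
  have linf: "linear f" unfolding f_def by (rule bounded_linear.linear[OF blinfun.bounded_linear_right])
  have injf: "inj f" unfolding f_def by (rule sqd_inj[OF M])
  obtain h where h: "linear h" "h \<circ> f = id" using linear_injective_left_inverse[OF linf injf] by blast
  have blh: "bounded_linear h" using h(1) by (simp add: linear_conv_bounded_linear)
  define invf where "invf = Blinfun h"
  have invf: "invf o\<^sub>L sqd M = id_blinfun"
    by (rule blinfun_eqI) (use h(2) in \<open>simp add: invf_def bounded_linear_Blinfun_apply[OF blh] f_def pointfree_idE\<close>)
  obtain U' V g g' where U': "open U'" "U' \<subseteq> UNIV" "M \<in> U'" and V: "open V" "M ** M \<in> V"
    and hom: "homeomorphism U' V (\<lambda>X. X ** X) g"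
    and gder: "\<And>y. y \<in> V \<Longrightarrow> (g has_derivative (g' y)) (at y)"
    and g'eq: "\<And>y. y \<in> V \<Longrightarrow> g' y = inv (blinfun_apply (sqd (g y)))"
    and "\<And>y. y \<in> V \<Longrightarrow> bij (blinfun_apply (sqd (g y)))"
    by (rule inverse_function_theorem[of UNIV "\<lambda>X. X ** X" sqd M invf, OF open_UNIV sq_deriv cont_sqd UNIV_I invf]) blast
  have gsq: "\<And>x. x \<in> U' \<Longrightarrow> g (x ** x) = x" and sqg: "\<And>y. y \<in> V \<Longrightarrow> g y ** g y = y"
    and gV: "g ` V = U'" and contg: "continuous_on V g"
    using hom unfolding homeomorphism_def by auto
  have gM: "g (M ** M) = M" using gsq U'(3) by blast
  have contgM: "continuous (at (M ** M)) g"
    using contg V continuous_on_eq_continuous_at by blast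
  have der: "(g has_derivative g' (M ** M)) (at (M ** M))" using gder V(2) by blast
  have char: "g' (M ** M) K = L" if "M ** L + L ** M = K" for K L
  proof -
    have "g' (M ** M) = inv f" using g'eq[OF V(2)] gM f_def by simp
    then show ?thesis using inv_f_f[OF injf, of L] that by (simp add: f_def sqd_apply)
  qed
  obtain e1 where e1: "e1 > 0" "ball M e1 \<subseteq> U'" using U' open_contains_ball by blast
  obtain Ka where Ka: "Ka > 0" "\<And>X::'n cmat. norm (adj X) \<le> norm X * Ka"
    using bounded_linear.pos_bounded[OF bl_adj] by blast
  have d0: "\<delta> > 0" using M upd_def by blast
  define c where "c = real CARD('n) * real CARD('n) * real CARD('n)"
  have c0: "c > 0" unfolding c_def by simp
  define \<eta> where "\<eta> = min (e1 / (Ka + 1)) (\<delta> / (2 * c))"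
  have \<eta>0: "\<eta> > 0" unfolding \<eta>_def using e1 Ka d0 c0 by simp
  obtain e2 where e2: "e2 > 0" "ball (M ** M) e2 \<subseteq> V" using V open_contains_ball by blast
  obtain e3 where e3: "e3 > 0" "\<And>z. dist z (M ** M) < e3 \<Longrightarrow> dist (g z) (g (M ** M)) < \<eta>"
    using contgM \<eta>0 unfolding continuous_at_eps_delta by metis
  define \<epsilon> where "\<epsilon> = min e2 e3"
  have herm: "upd (\<delta>/2) (g z) \<and> g z ** g z = z" if z: "dist z (M ** M) < \<epsilon>" "adj z = z" for z
  proof -
    have zV: "z \<in> V" using z e2 \<epsilon>_def by (auto simp: dist_commute)
    have gzU: "g z \<in> U'" using gV zV by blast
    have sq: "g z ** g z = z" using sqg zV by blast
    have dg: "norm (g z - M) < \<eta>" using e3(2)[of z] z \<epsilon>_def gM by (simp add: dist_norm)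
    have "norm (adj (g z) - M) = norm (adj (g z - M))"
      using M by (simp add: adj_diff upd_def)
    also have "\<dots> \<le> norm (g z - M) * Ka" by (rule Ka(2))
    also have "\<dots> < e1"
    proof -
      have "norm (g z - M) * Ka \<le> norm (g z - M) * (Ka + 1)" by (simp add: mult_left_mono)
      also have "\<dots> < e1 / (Ka + 1) * (Ka + 1)"
        using dg \<eta>_def Ka by (intro mult_strict_right_mono) auto
      also have "\<dots> = e1" using Ka by simp
      finally show ?thesis .
    qed
    finally have "adj (g z) \<in> U'" using e1 by (auto simp: dist_norm norm_minus_commute)
    then have "g (adj (g z) ** adj (g z)) = adj (g z)" by (rule gsq)
    moreover have "adj (g z) ** adj (g z) = z" using sq z(2) by (metis adj_mult)
    ultimately have hz: "adj (g z) = g z" by simp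
    have "c * norm (g z - M) \<le> \<delta>/2"
    proof -
      have "norm (g z - M) \<le> \<delta> / (2 * c)" using dg \<eta>_def by simp
      then have "c * norm (g z - M) \<le> c * (\<delta> / (2 * c))" using c0 by (intro mult_left_mono) auto
      also have "\<dots> = \<delta>/2" using c0 by simp
      finally show ?thesis .
    qed
    then have "upd (\<delta>/2) (g z)" using upd_perturb[OF M hz] c_def by (simp add: mult_ac)
    then show ?thesis using sq by blast
  qed
  show ?thesis
    apply (rule that[of \<epsilon> g "g' (M ** M)"])
    using e2 e3 gM contgM der char herm by (auto simp: \<epsilon>_def)
qed



definition Fd :: "'n::finite cmat \<Rightarrow> ('n \<Rightarrow> complex) \<Rightarrow> 'n cmat" where
  "Fd U \<phi> = U ** diag \<phi> ** adj U"

lemma diag_nth: "diag \<phi> $ i $ j = (if i = j then \<phi> i else 0)"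
  by (simp add: diag_def)
lemma if_mult0: "(if P then a else 0) * b = (if P then a * b else (0::'a::mult_zero))"
    "b * (if P then a else 0) = (if P then b * a else (0::'a::mult_zero))" by simp_all

lemma diag_mult: "diag \<phi> ** diag \<psi> = diag (\<lambda>j. \<phi> j * \<psi> j)"
  by (auto simp add: vec_eq_iff matrix_matrix_mult_def diag_nth if_mult0 sum.delta sum.delta')
lemma adj_diag: "adj (diag \<phi>) = diag (\<lambda>j. cnj (\<phi> j))"
  by (simp add: vec_eq_iff diag_nth)

lemma diag_one: "diag (\<lambda>_. 1) = mat 1"
  by (simp add: vec_eq_iff diag_nth mat_def)

lemma diag_mv: "(diag \<phi> *v y) $ j = \<phi> j * y $ j"
  by (simp add: matrix_vector_mult_def diag_nth if_mult0 sum.delta sum.delta')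

lemma mv_scale: "A *v (c *s x) = c *s (A *v (x::complex^'n::finite))"
  by (simp add: vec_eq_iff matrix_vector_mult_def sum_distrib_left mult_ac)

context
  fixes U :: "'n::finite cmat"
  assumes U: "unitary U"
begin

lemma UU: "U ** adj U = mat 1" "adj U ** U = mat 1"
  using U unitary_def by auto

lemma UU2[simp]: "adj U ** (U ** B) = B" "U ** (adj U ** B) = B" "B ** adj U ** U = B" "B ** U ** adj U = B"
  by (simp_all add: matrix_mul_assoc UU) (simp_all add: matrix_mul_assoc[symmetric] UU)

lemma Fd_mult: "Fd U \<phi> ** Fd U \<psi> = Fd U (\<lambda>j. \<phi> j * \<psi> j)"
proof -
  have "Fd U \<phi> ** Fd U \<psi> = U ** diag \<phi> ** (adj U ** U) ** diag \<psi> ** adj U"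
    unfolding Fd_def by (simp add: matrix_mul_assoc)
  also have "\<dots> = U ** (diag \<phi> ** diag \<psi>) ** adj U" by (simp add: UU matrix_mul_assoc)
  finally show ?thesis by (simp add: diag_mult Fd_def)
qed

lemma Fd_adj: "adj (Fd U \<phi>) = Fd U (\<lambda>j. cnj (\<phi> j))"
  unfolding Fd_def by (simp add: adj_mult adj_diag matrix_mul_assoc)

lemma Fd_one: "Fd U (\<lambda>_. 1) = mat 1"
  unfolding Fd_def by (simp add: diag_one UU)

lemma Fd_mv: "Fd U \<phi> *v x = U *v (diag \<phi> *v (adj U *v x))"
  unfolding Fd_def by (simp add: matrix_vector_mul_assoc matrix_mul_assoc)

lemma norm_sq_sum: "(norm x)^2 = (\<Sum>j\<in>UNIV. (cmod (x$j))^2)" for x :: "complex^'n"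
  unfolding norm_vec_def L2_set_def by (simp add: sum_nonneg)

lemma norm_adjU: "norm (adj U *v x) = norm x"
proof -
  have "cinner (adj U *v x) (adj U *v x) = cinner x (U *v (adj U *v x))"
    by (simp add: cinner_adj)
  also have "\<dots> = cinner x x" by (simp add: matrix_vector_mul_assoc UU)
  finally have "Re (cinner (adj U *v x) (adj U *v x)) = Re (cinner x x)" by simp
  then have "(norm (adj U *v x))^2 = (norm x)^2" by (simp add: Re_cinner_self)
  then show ?thesis by (metis norm_ge_zero power2_eq_iff_nonneg)
qed

lemma sq': "cnj z * (w * z) = w * (of_real (cmod z))^2"
  by (metis complex_norm_square of_real_power mult.commute mult.left_commute)

lemma Fd_upd:
  assumes "\<And>j. \<phi> j = of_real (s j)" "\<And>j. \<delta> \<le> s j" "0 < \<delta>"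
  shows "upd \<delta> (Fd U \<phi>)"
  unfolding upd_def
proof (intro conjI allI assms(3))
  have "(\<lambda>j. cnj (\<phi> j)) = \<phi>" using assms(1) by (auto simp: fun_eq_iff)
  then show "adj (Fd U \<phi>) = Fd U \<phi>" unfolding Fd_adj by simp
  fix x
  define y where "y = adj U *v x"
  have "cinner x (Fd U \<phi> *v x) = cinner y (diag \<phi> *v y)"
    unfolding Fd_mv y_def by (simp add: cinner_adj)
  also have "\<dots> = (\<Sum>j\<in>UNIV. of_real (s j * (cmod (y$j))^2))"
    unfolding cinner_def diag_mv assms(1)
    by (rule sum.cong) (simp_all add: sq')
  finally have "Re (cinner x (Fd U \<phi> *v x)) = (\<Sum>j\<in>UNIV. s j * (cmod (y$j))^2)"
    by (simp add: Re_sum)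
  moreover have "\<delta> * (norm x)^2 = (\<Sum>j\<in>UNIV. \<delta> * (cmod (y$j))^2)"
  proof -
    have "\<delta> * (norm x)^2 = \<delta> * (norm y)^2" using norm_adjU[of x] y_def by simp
    also have "\<dots> = (\<Sum>j\<in>UNIV. \<delta> * (cmod (y$j))^2)"
      by (simp only: norm_sq_sum[of y] sum_distrib_left)
    finally show ?thesis .
  qed
  moreover have "(\<Sum>j\<in>UNIV. \<delta> * (cmod (y$j))^2) \<le> (\<Sum>j\<in>UNIV. s j * (cmod (y$j))^2)"
    by (intro sum_mono mult_right_mono assms(2)) auto
  ultimately show "\<delta> * (norm x)^2 \<le> Re (cinner x (Fd U \<phi> *v x))" by simp
qed

definition ind :: "('n \<Rightarrow> complex) \<Rightarrow> complex \<Rightarrow> 'n \<Rightarrow> complex" where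
  "ind d \<mu> = (\<lambda>j. if d j = \<mu> then 1 else 0)"

lemma mat_comm: "A ** mat c = mat c ** (A::complex^'n^'n)"
  by (auto simp add: vec_eq_iff matrix_matrix_mult_def mat_def if_mult0 sum.delta sum.delta' mult.commute)

lemma mat_mv: "(mat c ** A) *v y = c *s (A *v (y::complex^'n))"
  by (simp add: vec_eq_iff matrix_vector_mult_def matrix_matrix_mult_def mat_def if_mult0 sum.delta sum.delta' sum_distrib_left mult_ac)

lemma Fd_const: "Fd U (\<lambda>_. c) = mat c"
proof -
  have "diag (\<lambda>_. c) = (mat c :: 'n cmat)" by (simp add: vec_eq_iff diag_nth mat_def)
  then have "Fd U (\<lambda>_. c) = U ** mat c ** adj U" unfolding Fd_def by simp
  also have "\<dots> = mat c ** U ** adj U" by (simp add: mat_comm)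
  finally show ?thesis by simp
qed

lemma spectral_Fd:
  assumes N: "N = Fd U d"
  shows "spectral_proj N \<mu> = Fd U (ind d \<mu>)"
  unfolding spectral_proj_def
proof (rule the_equality)
  let ?E = "Fd U (ind d \<mu>)"
  have "(\<lambda>j. ind d \<mu> j * ind d \<mu> j) = ind d \<mu>" by (auto simp: ind_def)
  then have EE: "?E ** ?E = ?E" by (simp add: Fd_mult)
  have "(\<lambda>j. cnj (ind d \<mu> j)) = ind d \<mu>" by (auto simp: ind_def)
  then have aE: "adj ?E = ?E" by (simp add: Fd_adj)
  have rng: "range (\<lambda>x. ?E *v x) = {x. N *v x = \<mu> *s x}"
  proof (intro equalityI subsetI)
    fix x assume "x \<in> range (\<lambda>x. ?E *v x)"
    then obtain y where y: "x = ?E *v y" by blast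
    have "Fd U (\<lambda>j. d j * ind d \<mu> j) = Fd U (\<lambda>j. \<mu> * ind d \<mu> j)"
      by (rule arg_cong[where f="Fd U"]) (auto simp: ind_def)
    also have "\<dots> = Fd U (\<lambda>_. \<mu>) ** ?E" by (simp add: Fd_mult)
    finally have "N ** ?E = mat \<mu> ** ?E" by (simp add: N Fd_mult Fd_const)
    then have "N *v x = (mat \<mu> ** ?E) *v y" by (simp add: y matrix_vector_mul_assoc)
    then show "x \<in> {x. N *v x = \<mu> *s x}" by (simp add: mat_mv y)
  next
    fix x assume "x \<in> {x. N *v x = \<mu> *s x}"
    then have ev: "N *v x = \<mu> *s x" by simp
    define y where "y = adj U *v x"
    have "diag d *v y = adj U *v (N *v x)"
      by (simp add: N Fd_mv y_def matrix_vector_mul_assoc UU)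
    also have "\<dots> = \<mu> *s y" by (simp add: ev y_def mv_scale)
    finally have dy0: "diag d *v y = \<mu> *s y" .
    have dy: "d j * y $ j = \<mu> * y $ j" for j
    proof -
      have "(diag d *v y) $ j = (\<mu> *s y) $ j" using dy0 by simp
      then show ?thesis by (simp add: diag_mv)
    qed
    have "diag (ind d \<mu>) *v y = y"
    proof (subst vec_eq_iff, intro allI)
      fix j show "(diag (ind d \<mu>) *v y) $ j = y $ j"
        using dy[of j] by (auto simp: diag_mv ind_def)
    qed
    then have "?E *v x = U *v y" by (simp add: Fd_mv y_def[symmetric])
    also have "U *v y = x" by (simp add: y_def matrix_vector_mul_assoc UU)
    finally have "?E *v x = x" .
    then show "x \<in> range (\<lambda>x. ?E *v x)" by (intro range_eqI[of _ _ x]) simp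
  qed
  show "?E ** ?E = ?E \<and> adj ?E = ?E \<and> range (\<lambda>x. ?E *v x) = {x. N *v x = \<mu> *s x}"
    using EE aE rng by blast
  fix E assume E: "E ** E = E \<and> adj E = E \<and> range (\<lambda>x. E *v x) = {x. N *v x = \<mu> *s x}"
  then have E1: "E ** E = E" and E2: "adj E = E" and E3: "range (\<lambda>x. E *v x) = {x. N *v x = \<mu> *s x}"
    by blast+
  show "E = ?E" by (rule proj_unique[OF E1 E2 EE aE]) (simp only: E3 rng)
qed

lemma conj_cancel:
  assumes "U ** A ** adj U = U ** B ** adj U" shows "A = B"
proof -
  have "A = adj U ** (U ** A ** adj U) ** U" by (simp only: matrix_mul_assoc UU matrix_mul_lid UU2)
  also have "\<dots> = adj U ** (U ** B ** adj U) ** U" by (simp only: assms)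
  also have "\<dots> = B" by (simp only: matrix_mul_assoc UU matrix_mul_lid UU2)
  finally show ?thesis .
qed

lemma comm_Fd:
  assumes X: "\<forall>\<mu>\<in>range d. X ** Fd U (ind d \<mu>) = Fd U (ind d \<mu>) ** X"
    and resp: "\<And>i j. d i = d j \<Longrightarrow> \<psi> i = \<psi> j"
  shows "X ** Fd U \<psi> = Fd U \<psi> ** X"
proof -
  define Y where "Y = adj U ** X ** U"
  have XY: "X = U ** Y ** adj U" by (simp add: Y_def matrix_mul_assoc UU)
  have c1: "X ** Fd U \<phi> = U ** (Y ** diag \<phi>) ** adj U" for \<phi>
    by (simp add: XY Fd_def matrix_mul_assoc UU)
  have c2: "Fd U \<phi> ** X = U ** (diag \<phi> ** Y) ** adj U" for \<phi>
    by (simp add: XY Fd_def matrix_mul_assoc UU)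
  have e1: "(Y ** diag \<phi>) $ i $ j = Y $ i $ j * \<phi> j" for \<phi> i j
    by (simp add: matrix_matrix_mult_def diag_nth if_mult0 sum.delta sum.delta')
  have e2: "(diag \<phi> ** Y) $ i $ j = \<phi> i * Y $ i $ j" for \<phi> i j
    by (simp add: matrix_matrix_mult_def diag_nth if_mult0 sum.delta sum.delta')
  have zero: "Y $ i $ j = 0" if "d i \<noteq> d j" for i j
  proof -
    have "X ** Fd U (ind d (d j)) = Fd U (ind d (d j)) ** X" using X by blast
    then have "Y ** diag (ind d (d j)) = diag (ind d (d j)) ** Y"
      unfolding c1 c2 by (rule conj_cancel)
    then have "(Y ** diag (ind d (d j))) $ i $ j = (diag (ind d (d j)) ** Y) $ i $ j" by simp
    then show ?thesis using that by (simp add: e1 e2 ind_def)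
  qed
  have ent: "(Y ** diag \<psi>) $ i $ j = (diag \<psi> ** Y) $ i $ j" for i j
  proof (cases "d i = d j")
    case True then show ?thesis using resp[OF True] by (simp add: e1 e2 mult.commute)
  next
    case False then show ?thesis using zero[OF False] by (simp add: e1 e2)
  qed
  have "Y ** diag \<psi> = diag \<psi> ** Y"
    by (rule vec_eq_iff[THEN iffD2], intro allI, rule vec_eq_iff[THEN iffD2], intro allI, rule ent)
  then show ?thesis unfolding c1 c2 by (rule arg_cong[where f="\<lambda>Z. U ** Z ** adj U"])
qed

end




lemma mm_deriv:
  fixes f g :: "'a::real_normed_vector \<Rightarrow> 'n::finite cmat"
  assumes "(f has_derivative f') (at x)" "(g has_derivative g') (at x)"
  shows "((\<lambda>x. f x ** g x) has_derivative (\<lambda>h. f x ** g' h + f' h ** g x)) (at x)"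
  using bounded_bilinear.FDERIV[OF bb_mm assms] by simp

definition resp :: "('n \<Rightarrow> complex) \<Rightarrow> ('n \<Rightarrow> complex) \<Rightarrow> bool" where
  "resp d \<psi> \<longleftrightarrow> (\<forall>i j. d i = d j \<longrightarrow> \<psi> i = \<psi> j)"

lemma resp_mult[simp]: "resp d f \<Longrightarrow> resp d g \<Longrightarrow> resp d (\<lambda>j. f j * g j)"
  unfolding resp_def by metis
lemma resp_inv[simp]: "resp d f \<Longrightarrow> resp d (\<lambda>j. inverse (f j))"
  unfolding resp_def by metis
lemma resp_cnj[simp]: "resp d f \<Longrightarrow> resp d (\<lambda>j. cnj (f j))"
  unfolding resp_def by metis
lemma resp_id[simp]: "resp d d"
  unfolding resp_def by blast

context
  fixes U :: "'n::finite cmat" and K :: "'n cmat" and d :: "'n \<Rightarrow> complex"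
  assumes U: "unitary U"
    and Kc: "\<And>\<psi>. resp d \<psi> \<Longrightarrow> K ** Fd U \<psi> = Fd U \<psi> ** K"
begin

lemma sandwich:
  assumes "resp d \<alpha>"
  shows "Fd U \<alpha> ** K ** Fd U \<beta> = K ** Fd U (\<lambda>j. \<alpha> j * \<beta> j)"
proof -
  have "Fd U \<alpha> ** K ** Fd U \<beta> = K ** Fd U \<alpha> ** Fd U \<beta>" using Kc[OF assms] by simp
  also have "\<dots> = K ** Fd U (\<lambda>j. \<alpha> j * \<beta> j)"
    by (simp only: matrix_mul_assoc[symmetric] Fd_mult[OF U])
  finally show ?thesis .
qed

end


lemma half_sum: "(1/2) *\<^sub>R Z + (1/2) *\<^sub>R Z = (Z::'a::real_vector)"
  by (simp add: scaleR_add_left[symmetric])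
lemma quarter_sum: "(1/4) *\<^sub>R Z + (1/4) *\<^sub>R Z = (1/2) *\<^sub>R (Z::'a::real_vector)"
  by (simp add: scaleR_add_left[symmetric])
lemma final_sum: "(1/4) *\<^sub>R Z + (- ((1/2) *\<^sub>R Z) + X + (1/4) *\<^sub>R Z) = (X::'a::real_vector)"
proof -
  have "(1/4) *\<^sub>R Z + (- ((1/2) *\<^sub>R Z) + X + (1/4) *\<^sub>R Z) = X + ((1/4) *\<^sub>R Z + (1/4) *\<^sub>R Z) - (1/2) *\<^sub>R Z"
    by (simp add: algebra_simps)
  also have "\<dots> = X" by (simp add: quarter_sum)
  finally show ?thesis .
qed

lemma Fd_fun_cong: "(\<And>j. f j = g j) \<Longrightarrow> Fd U f = Fd U g"
  by (rule arg_cong[where f="Fd U"]) (rule ext)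

theorem proposition3p1:
  fixes d :: "'n::finite \<Rightarrow> complex" and N :: "'n cmat"
  assumes "\<forall>i. d i \<noteq> 0"
    and "N \<in> unitary_orbit (diag d)"
  shows "aluthge differentiable (at N) \<and>
         (\<forall>X\<in>AN d N. frechet_derivative aluthge (at N) X = X)"
proof -
  obtain U where U: "unitary U" and Ndef: "N = U ** diag d ** adj U"
    using assms(2) unfolding unitary_orbit_def by blast
  have NF: "N = Fd U d" by (simp add: Ndef Fd_def)
  define c where "c j = cmod (d j)" for j
  have cpos: "0 < c j" for j using assms(1) by (simp add: c_def)
  define \<delta> where "\<delta> = Min (range c)"
  have \<delta>pos: "0 < \<delta>" unfolding \<delta>_def using cpos by (simp add: Min_gr_iff)
  have \<delta>le: "\<delta> \<le> c j" for j unfolding \<delta>_def by (rule Min_le) auto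
  define mf where "mf j = complex_of_real (c j)" for j
  define rf where "rf j = complex_of_real (sqrt (c j))" for j
  have mf0: "mf j \<noteq> 0" for j using cpos[of j] by (simp add: mf_def)
  have rf0: "rf j \<noteq> 0" for j using cpos[of j] by (simp add: rf_def)
  have rfrf: "rf j * rf j = mf j" for j
    using cpos[of j] by (simp add: rf_def mf_def of_real_mult[symmetric] del: of_real_mult)
  have cnjd: "cnj (d j) * d j = mf j * mf j" for j
    by (simp add: mf_def c_def) (metis complex_norm_square mult.commute of_real_power power2_eq_square)
  have resp_mf: "resp d mf" unfolding resp_def mf_def c_def by simp
  have resp_rf: "resp d rf" unfolding resp_def rf_def c_def by simp
  define M where "M = Fd U mf"
  define Mi where "Mi = Fd U (\<lambda>j. inverse (mf j))"
  define R0 where "R0 = Fd U rf"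
  define Ri where "Ri = Fd U (\<lambda>j. inverse (rf j))"
  have updM: "upd \<delta> M" unfolding M_def
    by (rule Fd_upd[OF U, of mf c]) (auto simp: mf_def \<delta>le \<delta>pos)
  have updR: "upd (sqrt \<delta>) R0" unfolding R0_def
    by (rule Fd_upd[OF U, of rf "\<lambda>j. sqrt (c j)"]) (auto simp: rf_def \<delta>le \<delta>pos real_sqrt_le_mono)
  define A0 where "A0 = adj N ** N"
  have MM: "M ** M = A0"
  proof -
    have "A0 = Fd U (\<lambda>j. cnj (d j)) ** Fd U d" by (simp add: A0_def NF Fd_adj[OF U])
    also have "\<dots> = Fd U (\<lambda>j. mf j * mf j)" by (simp add: Fd_mult[OF U] cnjd)
    finally show ?thesis by (simp add: M_def Fd_mult[OF U])
  qed
  have RR: "R0 ** R0 = M" by (simp add: R0_def M_def Fd_mult[OF U] rfrf)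
  have MMi: "M ** Mi = mat 1" by (simp add: M_def Mi_def Fd_mult[OF U] mf0 Fd_one[OF U])
  have MiM: "Mi ** M = mat 1" by (simp add: M_def Mi_def Fd_mult[OF U] mf0 Fd_one[OF U])
  have minvM: "minv M = Mi" by (rule minv_eq[OF MMi MiM])
  obtain g1 g1' e1 where e1: "e1 > 0" and g1M: "g1 (M ** M) = M"
    and cg1: "continuous (at (M ** M)) g1"
    and dg1: "(g1 has_derivative g1') (at (M ** M))"
    and ch1: "\<And>K L. M ** L + L ** M = K \<Longrightarrow> g1' K = L"
    and h1: "\<And>z. dist z (M ** M) < e1 \<Longrightarrow> adj z = z \<Longrightarrow> upd (\<delta>/2) (g1 z) \<and> g1 z ** g1 z = z"
    by (rule local_sqrt[OF updM]) blast
  obtain g2 g2' e2 where e2: "e2 > 0" and g2M: "g2 (R0 ** R0) = R0"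
    and cg2: "continuous (at (R0 ** R0)) g2"
    and dg2: "(g2 has_derivative g2') (at (R0 ** R0))"
    and ch2: "\<And>K L. R0 ** L + L ** R0 = K \<Longrightarrow> g2' K = L"
    and h2: "\<And>z. dist z (R0 ** R0) < e2 \<Longrightarrow> adj z = z \<Longrightarrow> upd (sqrt \<delta>/2) (g2 z) \<and> g2 z ** g2 z = z"
    by (rule local_sqrt[OF updR]) blast
  define a where "a T = adj T ** T" for T :: "'n cmat"
  have aN: "a N = A0" by (simp add: a_def A0_def)
  have da: "(a has_derivative (\<lambda>H. adj N ** H + adj H ** N)) (at N)"
    unfolding a_def by (rule mm_deriv[OF bounded_linear_imp_has_derivative[OF bl_adj] has_derivative_ident])
  have g1aN: "g1 (a N) = M" using g1M MM aN by simp
  have g2M': "g2 M = R0" using g2M RR by simp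
  have ca: "continuous (at N) a" by (rule has_derivative_continuous[OF da])
  have cg1a: "continuous (at N) (\<lambda>T. g1 (a T))"
    using continuous_at_compose[OF ca, of g1] cg1 MM aN by (simp add: o_def)
  obtain r1 where r1: "r1 > 0" "\<And>T. dist T N < r1 \<Longrightarrow> dist (a T) (a N) < e1"
    using ca e1 unfolding continuous_at_eps_delta by metis
  obtain r2 where r2: "r2 > 0" "\<And>T. dist T N < r2 \<Longrightarrow> dist (g1 (a T)) (g1 (a N)) < e2"
    using cg1a e2 unfolding continuous_at_eps_delta by metis
  define r where "r = min r1 r2"
  have rpos: "r > 0" using r1 r2 by (simp add: r_def)
  define G where "G T = g2 (g1 (a T)) ** (T ** minv (g1 (a T))) ** g2 (g1 (a T))" for T
  have eqG: "aluthge T = G T" if T: "dist T N < r" for T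
  proof -
    have z1: "dist (a T) (M ** M) < e1" using r1(2)[of T] T aN MM by (simp add: r_def)
    have herm: "adj (a T) = a T" by (simp add: a_def adj_mult)
    have s1: "upd (\<delta>/2) (g1 (a T))" "g1 (a T) ** g1 (a T) = a T" using h1[OF z1 herm] by auto
    have ma: "mabs T = g1 (a T)" unfolding mabs_def using msqrt_eq[OF s1] by (simp add: a_def)
    have z2: "dist (g1 (a T)) (R0 ** R0) < e2" using r2(2)[of T] T g1aN RR by (simp add: r_def)
    have herm2: "adj (g1 (a T)) = g1 (a T)" using s1(1) upd_def by blast
    have s2: "upd (sqrt \<delta>/2) (g2 (g1 (a T)))" "g2 (g1 (a T)) ** g2 (g1 (a T)) = g1 (a T)"
      using h2[OF z2 herm2] by auto
    have mr: "msqrt (g1 (a T)) = g2 (g1 (a T))" by (rule msqrt_eq[OF s2])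
    show ?thesis unfolding aluthge_def polar_unitary_def ma mr G_def ..
  qed
  have dL: "((\<lambda>T. g1 (a T)) has_derivative (\<lambda>H. g1' (adj N ** H + adj H ** N))) (at N)"
    by (rule has_derivative_compose[OF da]) (simp add: aN MM[symmetric] dg1)
  have dR: "((\<lambda>T. g2 (g1 (a T))) has_derivative (\<lambda>H. g2' (g1' (adj N ** H + adj H ** N)))) (at N)"
    by (rule has_derivative_compose[OF dL]) (simp add: g1aN RR[symmetric] dg2)
  have dI: "((\<lambda>T. minv (g1 (a T))) has_derivative (\<lambda>H. - (Mi ** g1' (adj N ** H + adj H ** N) ** Mi))) (at N)"
    by (rule has_derivative_compose[OF dL]) (simp add: g1aN minv_deriv[OF MMi])
  have dQ: "((\<lambda>T. T ** minv (g1 (a T))) has_derivative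
      (\<lambda>H. N ** - (Mi ** g1' (adj N ** H + adj H ** N) ** Mi) + H ** minv (g1 (a N)))) (at N)"
    by (rule mm_deriv[OF has_derivative_ident dI])
  note dG0 = mm_deriv[OF mm_deriv[OF dR dQ] dR]
  note dG1 = dG0[unfolded g1aN g2M' minvM]
  define D where "D h = R0 ** (N ** Mi) ** g2' (g1' (adj N ** h + adj h ** N)) +
         (R0 ** (N ** - (Mi ** g1' (adj N ** h + adj h ** N) ** Mi) + h ** Mi) +
          g2' (g1' (adj N ** h + adj h ** N)) ** (N ** Mi)) ** R0" for h
  have dG: "(G has_derivative D) (at N)" unfolding G_def[abs_def] D_def[abs_def] by (rule dG1)
  have dAl: "(aluthge has_derivative D) (at N)"
    by (rule has_derivative_transform_within[OF dG rpos UNIV_I]) (simp add: eqG)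
  have fd: "frechet_derivative aluthge (at N) = D" using frechet_derivative_at[OF dAl] by simp
  have diff: "aluthge differentiable (at N)" using dAl differentiable_def by blast
  have main: "D X = X" if X: "X \<in> AN d N" for X
  proof -
    have Xc0: "\<forall>\<mu>\<in>range d. X ** Fd U (ind d \<mu>) = Fd U (ind d \<mu>) ** X"
      using X unfolding AN_def by (simp add: spectral_Fd[OF U NF])
    have Xc: "X ** Fd U \<psi> = Fd U \<psi> ** X" if "resp d \<psi>" for \<psi>
      by (rule comm_Fd[OF U Xc0]) (use that in \<open>unfold resp_def, blast\<close>)
    have aXc: "adj X ** Fd U \<psi> = Fd U \<psi> ** adj X" if "resp d \<psi>" for \<psi>
    proof -
      have "X ** Fd U (\<lambda>j. cnj (\<psi> j)) = Fd U (\<lambda>j. cnj (\<psi> j)) ** X" using that by (simp add: Xc)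
      then have "adj (X ** Fd U (\<lambda>j. cnj (\<psi> j))) = adj (Fd U (\<lambda>j. cnj (\<psi> j)) ** X)" by simp
      then show ?thesis by (simp add: adj_mult Fd_adj[OF U])
    qed
    define K where "K = adj N ** X + adj X ** N"
    define Fcd where "Fcd = Fd U (\<lambda>j. cnj (d j))"
    have aN': "adj (Fd U d) = Fcd" by (simp add: Fd_adj[OF U] Fcd_def)
    have Kc: "K ** Fd U \<psi> = Fd U \<psi> ** K" if "resp d \<psi>" for \<psi>
    proof -
      have c1: "Fcd ** Fd U \<psi> = Fd U \<psi> ** Fcd"
        by (simp add: Fd_mult[OF U] mult.commute Fcd_def)
      have c2: "Fd U d ** Fd U \<psi> = Fd U \<psi> ** Fd U d" by (simp add: Fd_mult[OF U] mult.commute)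
      have "K ** Fd U \<psi> = Fcd ** X ** Fd U \<psi> + adj X ** Fd U d ** Fd U \<psi>"
        by (simp only: K_def aN' NF mm_add_l)
      also have "\<dots> = Fcd ** (X ** Fd U \<psi>) + adj X ** (Fd U d ** Fd U \<psi>)"
        by (simp only: matrix_mul_assoc)
      also have "\<dots> = Fcd ** (Fd U \<psi> ** X) + adj X ** (Fd U \<psi> ** Fd U d)"
        by (simp only: Xc[OF that] c2)
      also have "\<dots> = (Fcd ** Fd U \<psi>) ** X + (adj X ** Fd U \<psi>) ** Fd U d"
        by (simp only: matrix_mul_assoc)
      also have "\<dots> = (Fd U \<psi> ** Fcd) ** X + (Fd U \<psi> ** adj X) ** Fd U d"
        by (simp only: c1 aXc[OF that])
      also have "\<dots> = Fd U \<psi> ** K"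
        by (simp only: K_def aN' NF mm_add_r matrix_mul_assoc)
      finally show ?thesis .
    qed
    note sw = sandwich[where d=d and K=K, OF U Kc]
    have KM: "M ** K = K ** M" using Kc[OF resp_mf] by (simp add: M_def)
    have KR: "R0 ** K = K ** R0" using Kc[OF resp_rf] by (simp add: R0_def)
    have Lv: "g1' K = (1/2) *\<^sub>R (K ** Mi)"
    proof (rule ch1)
      have a1: "M ** (K ** Mi) = K" by (simp only: matrix_mul_assoc KM) (simp add: matrix_mul_assoc[symmetric] MMi)
      have a2: "(K ** Mi) ** M = K" by (simp add: matrix_mul_assoc[symmetric] MiM)
      show "M ** ((1/2) *\<^sub>R (K ** Mi)) + ((1/2) *\<^sub>R (K ** Mi)) ** M = K"
        by (simp only: mm_scaleR_l mm_scaleR_r a1 a2 half_sum)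
    qed
    have RMR: "R0 ** (Mi ** Ri) = Mi"
      unfolding R0_def Mi_def Ri_def Fd_mult[OF U] by (rule Fd_fun_cong) (simp add: rf0)
    have MRR: "Mi ** Ri ** R0 = Mi"
      unfolding R0_def Mi_def Ri_def Fd_mult[OF U] by (rule Fd_fun_cong) (simp add: rf0)
    have Pv: "g2' ((1/2) *\<^sub>R (K ** Mi)) = (1/4) *\<^sub>R (K ** (Mi ** Ri))"
    proof (rule ch2)
      have a1: "R0 ** (K ** (Mi ** Ri)) = K ** Mi"
        by (simp only: matrix_mul_assoc KR) (simp only: matrix_mul_assoc[symmetric] RMR)
      have a2: "(K ** (Mi ** Ri)) ** R0 = K ** Mi"
        by (simp only: matrix_mul_assoc[symmetric]) (simp only: matrix_mul_assoc MRR)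
      show "R0 ** ((1/4) *\<^sub>R (K ** (Mi ** Ri))) + ((1/4) *\<^sub>R (K ** (Mi ** Ri))) ** R0 = (1/2) *\<^sub>R (K ** Mi)"
        by (simp only: mm_scaleR_l mm_scaleR_r a1 a2 quarter_sum)
    qed
    define W where "W = Fd U (\<lambda>j. d j * inverse (mf j) * inverse (mf j))"
    have t1: "R0 ** (N ** Mi) ** ((1/4) *\<^sub>R (K ** (Mi ** Ri))) = (1/4) *\<^sub>R (K ** W)"
    proof -
      have e1: "R0 ** (N ** Mi) = Fd U (\<lambda>j. rf j * (d j * inverse (mf j)))"
        by (simp only: R0_def NF Mi_def Fd_mult[OF U])
      have e2: "Mi ** Ri = Fd U (\<lambda>j. inverse (mf j) * inverse (rf j))"
        by (simp only: Ri_def Mi_def Fd_mult[OF U])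
      have "R0 ** (N ** Mi) ** (K ** (Mi ** Ri)) = Fd U (\<lambda>j. rf j * (d j * inverse (mf j))) ** K ** Fd U (\<lambda>j. inverse (mf j) * inverse (rf j))"
        by (simp only: e1 e2) (simp only: matrix_mul_assoc)
      also have "\<dots> = K ** Fd U (\<lambda>j. rf j * (d j * inverse (mf j)) * (inverse (mf j) * inverse (rf j)))"
        by (rule sw, assumption, intro resp_mult resp_inv resp_rf resp_mf resp_id)
      also have "\<dots> = K ** W" unfolding W_def
        by (rule arg_cong[where f="\<lambda>Z. K ** Z"], rule Fd_fun_cong) (simp add: rf0 field_simps)
      finally show ?thesis by (simp only: mm_scaleR_r)
    qed
    define \<gamma> where "\<gamma> j = inverse (mf j) * (inverse (mf j) * inverse (mf j))" for j
    have resp_g: "resp d \<gamma>" unfolding \<gamma>_def by (intro resp_mult resp_inv resp_mf)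
    have t2: "R0 ** (N ** - (Mi ** ((1/2) *\<^sub>R (K ** Mi)) ** Mi)) ** R0 = - ((1/2) *\<^sub>R (K ** W))"
    proof -
      have "Mi ** (K ** Mi) ** Mi = Mi ** K ** (Mi ** Mi)" by (simp only: matrix_mul_assoc)
      also have "\<dots> = Fd U (\<lambda>j. inverse (mf j)) ** K ** Fd U (\<lambda>j. inverse (mf j) * inverse (mf j))"
        by (simp only: Mi_def Fd_mult[OF U])
      also have "\<dots> = K ** Fd U \<gamma>" unfolding \<gamma>_def
        by (rule sw, assumption, intro resp_mult resp_inv resp_rf resp_mf resp_id)
      finally have i1: "Mi ** (K ** Mi) ** Mi = K ** Fd U \<gamma>" .
      have e: "Fd U (\<lambda>j. rf j * d j) = R0 ** N" by (simp only: R0_def NF Fd_mult[OF U])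
      have e': "Fd U (\<lambda>j. \<gamma> j * rf j) = Fd U \<gamma> ** R0" by (simp only: R0_def Fd_mult[OF U])
      have "R0 ** (N ** (K ** Fd U \<gamma>)) ** R0 = Fd U (\<lambda>j. rf j * d j) ** K ** Fd U (\<lambda>j. \<gamma> j * rf j)"
        by (simp only: e e' matrix_mul_assoc)
      also have "\<dots> = K ** Fd U (\<lambda>j. rf j * d j * (\<gamma> j * rf j))"
        by (rule sw, assumption, intro resp_mult resp_inv resp_rf resp_mf resp_id)
      also have "\<dots> = K ** W" unfolding W_def
        by (rule arg_cong[where f="\<lambda>Z. K ** Z"], rule Fd_fun_cong)
           (simp add: \<gamma>_def field_simps rf0 mf0 rfrf[symmetric])
      finally have i2: "R0 ** (N ** (K ** Fd U \<gamma>)) ** R0 = K ** W" .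
      show ?thesis
        by (simp only: mm_minus_r mm_minus_l mm_scaleR_r mm_scaleR_l i1 i2)
    qed
    have t3: "R0 ** (X ** Mi) ** R0 = X"
    proof -
      have RX: "R0 ** X = X ** R0" using Xc[OF resp_rf] by (simp add: R0_def)
      have one: "R0 ** Mi ** R0 = mat 1"
      proof -
        have "R0 ** Mi ** R0 = Fd U (\<lambda>j. rf j * inverse (mf j) * rf j)"
          by (simp only: R0_def Mi_def Fd_mult[OF U])
        also have "\<dots> = Fd U (\<lambda>_. 1)" by (rule Fd_fun_cong) (simp add: field_simps mf0 rfrf[symmetric] rf0)
        finally show ?thesis by (simp only: Fd_one[OF U])
      qed
      have "R0 ** (X ** Mi) ** R0 = (R0 ** X) ** Mi ** R0" by (simp only: matrix_mul_assoc)
      also have "\<dots> = X ** (R0 ** Mi ** R0)" by (simp only: RX matrix_mul_assoc)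
      also have "\<dots> = X" by (simp only: one matrix_mul_rid)
      finally show ?thesis .
    qed
    have t4: "((1/4) *\<^sub>R (K ** (Mi ** Ri))) ** (N ** Mi) ** R0 = (1/4) *\<^sub>R (K ** W)"
    proof -
      have "(Mi ** Ri) ** (N ** Mi) ** R0 = Fd U (\<lambda>j. inverse (mf j) * inverse (rf j) * (d j * inverse (mf j)) * rf j)"
        by (simp only: Mi_def Ri_def NF R0_def Fd_mult[OF U])
      also have "\<dots> = W" unfolding W_def by (rule Fd_fun_cong) (simp add: field_simps rf0 mf0)
      finally have w: "(Mi ** Ri) ** (N ** Mi) ** R0 = W" .
      have "(K ** (Mi ** Ri)) ** (N ** Mi) ** R0 = K ** ((Mi ** Ri) ** (N ** Mi) ** R0)"
        by (simp only: matrix_mul_assoc)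
      then show ?thesis by (simp only: mm_scaleR_l w)
    qed
    have "D X = R0 ** (N ** Mi) ** g2' (g1' K) +
         (R0 ** (N ** - (Mi ** g1' K ** Mi)) ** R0 + R0 ** (X ** Mi) ** R0 +
          g2' (g1' K) ** (N ** Mi) ** R0)"
      by (simp only: D_def K_def[symmetric] mm_add_l mm_add_r)
    also have "\<dots> = (1/4) *\<^sub>R (K ** W) + (- ((1/2) *\<^sub>R (K ** W)) + X + (1/4) *\<^sub>R (K ** W))"
      by (simp only: Lv Pv t1 t2 t3 t4)
    also have "\<dots> = X" by (rule final_sum)
    finally show ?thesis .
  qed
  show ?thesis using diff main fd by simp
qed


end
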